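(* For any symmetric caching scheme with $K$ users, cache fraction $\frac{M}{N}$ and subpacketization $F$, on a system with $N\ge K(1-\frac{M}{N})$ files, the optimal rate $R^*$ satisfies $$R^*F\ge (K+F)\Big(1-\frac{M}{N}\Big)-1.$$
   Context: Coded caching setup: a server holds $N$ files, each consisting of $F$ subfiles that are independent and uniform over a finite abelian group (each of unit entropy), connected by an error-free broadcast link to $K$ users each able to cache $M$ files; $FM/N$ is an integer. Symmetric caching: each user caches, for each subfile index $f$, the $f$-th subfile of either all files or none, and caches exactly $FM/N$ indices. Equivalently, the caching is described by a bipartite graph with $K$ left (user) vertices and $F$ right (subfile) vertices in which every user has degree $D=F(1-M/N)$, with user $k$ adjacent to $f$ iff it does not cache index $f$. A rate $R$ is achievable if there exist such a symmetric caching and a (possibly nonlinear) delivery scheme which, for every demand vector (each user demanding one file), broadcasts a message of total size $RF$ subfile units allowing each user to recover its demanded file; $R^*$ is the infimum of achievable rates for the given $K,F,M/N$. *)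

theory Defs
  imports Main Complex_Main
begin

text \<open>Indices: users k < K, files n < N, subfile indices f < F.
  A library is an array W n f of subfiles, each an element of the finite
  abelian group 'g (unit entropy = log |'g|); entries outside the range are 0.\<close>

definition library :: "nat \<Rightarrow> nat \<Rightarrow> (nat \<Rightarrow> nat \<Rightarrow> 'g::{finite,ab_group_add}) set" where
  "library N F = {W. \<forall>n f. (N \<le> n \<or> F \<le> f) \<longrightarrow> W n f = 0}"

text \<open>Symmetric caching: user k caches, for every f in Z k, the f-th subfile of
  all files; it caches exactly F*M/N indices.\<close>

definition symmetric_caching :: "nat \<Rightarrow> nat \<Rightarrow> nat \<Rightarrow> real \<Rightarrow> (nat \<Rightarrow> nat set) \<Rightarrow> bool" where
  "symmetric_caching K N F M Z \<longleftrightarrow>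
     (\<forall>k<K. Z k \<subseteq> {..<F} \<and> real (card (Z k)) = real F * M / real N)"

definition cache_content :: "nat \<Rightarrow> (nat \<Rightarrow> nat set) \<Rightarrow> nat \<Rightarrow>
     (nat \<Rightarrow> nat \<Rightarrow> 'g::{finite,ab_group_add}) \<Rightarrow> (nat \<Rightarrow> nat \<Rightarrow> 'g)" where
  "cache_content N Z k W = (\<lambda>n f. if n < N \<and> f \<in> Z k then W n f else 0)"

text \<open>Rate R is achievable: there is a symmetric caching and a (possibly nonlinear)
  delivery scheme which, for every demand vector d, broadcasts a message taking at most
  |'g| powr (R F) values (i.e. of size R F subfile units) from which every user k,
  using its cache contents, recovers all subfiles of file d k.\<close>

definition achievable :: "'g::{finite,ab_group_add} itself \<Rightarrow> nat \<Rightarrow> nat \<Rightarrow> nat \<Rightarrow> real \<Rightarrow> real \<Rightarrow> bool" where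
  "achievable G K N F M R \<longleftrightarrow>
     (\<exists>Z (enc :: (nat \<Rightarrow> nat) \<Rightarrow> (nat \<Rightarrow> nat \<Rightarrow> 'g) \<Rightarrow> nat)
        (dec :: (nat \<Rightarrow> nat) \<Rightarrow> nat \<Rightarrow> nat \<Rightarrow> (nat \<Rightarrow> nat \<Rightarrow> 'g) \<Rightarrow> nat \<Rightarrow> 'g).
        symmetric_caching K N F M Z \<and>
        (\<forall>d. (\<forall>k<K. d k < N) \<longrightarrow>
            real (card (enc d ` library N F)) \<le> real (card (UNIV :: 'g set)) powr (R * real F) \<and>
            (\<forall>W\<in>library N F. \<forall>k<K. \<forall>f<F.
               dec d k (enc d W) (cache_content N Z k W) f = W (d k) f)))"

definition optimal_rate :: "'g::{finite,ab_group_add} itself \<Rightarrow> nat \<Rightarrow> nat \<Rightarrow> nat \<Rightarrow> real \<Rightarrow> real" where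
  "optimal_rate G K N F M = Inf {R. achievable G K N F M R}"

end

theory Submission imports Defs "HOL-Library.FuncSet" begin

definition emb :: "(nat \<times> nat) set \<Rightarrow> (nat \<times> nat \<Rightarrow> 'g::zero) \<Rightarrow> nat \<Rightarrow> nat \<Rightarrow> 'g" where
  "emb P g = (\<lambda>n f. if (n,f) \<in> P then g (n,f) else 0)"

lemma emb_inj: "inj_on (emb P) (PiE P (\<lambda>_. UNIV))"
proof (rule inj_onI)
  fix g g' assume g: "g \<in> PiE P (\<lambda>_. UNIV)" and g': "g' \<in> PiE P (\<lambda>_. UNIV)"
    and e: "emb P g = emb P g'"
  show "g = g'"
  proof (rule PiE_ext[OF g g'])
    fix i assume "i \<in> P"
    then show "g i = g' i" using fun_cong[OF fun_cong[OF e, of "fst i"], of "snd i"]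
      by (auto simp: emb_def)
  qed
qed

lemma card_PiE_UNIV: "finite P \<Longrightarrow> card (PiE P (\<lambda>_. UNIV :: 'g::finite set)) = card (UNIV :: 'g set) ^ card P"
  by (simp add: card_PiE)

lemma library_sub: "library N F \<subseteq> emb ({..<N} \<times> {..<F}) ` PiE ({..<N} \<times> {..<F}) (\<lambda>_. UNIV)"
proof
  fix W :: "nat \<Rightarrow> nat \<Rightarrow> 'g::{finite,ab_group_add}" assume W: "W \<in> library N F"
  have "W = emb ({..<N} \<times> {..<F}) (restrict (\<lambda>(n,f). W n f) ({..<N} \<times> {..<F}))"
    using W by (auto simp: emb_def library_def fun_eq_iff not_less)
  moreover have "restrict (\<lambda>(n,f). W n f) ({..<N} \<times> {..<F}) \<in> PiE ({..<N} \<times> {..<F}) (\<lambda>_. UNIV)"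
    by auto
  ultimately show "W \<in> emb ({..<N} \<times> {..<F}) ` PiE ({..<N} \<times> {..<F}) (\<lambda>_. UNIV)" by blast
qed

lemma library_finite: "finite (library N F :: (nat \<Rightarrow> nat \<Rightarrow> 'g::{finite,ab_group_add}) set)"
  by (rule finite_subset[OF library_sub]) (intro finite_imageI finite_PiE, auto)

lemma zero_library: "(\<lambda>_ _. 0) \<in> library N F"
  by (simp add: library_def)

lemma emb_library: "P \<subseteq> {..<N} \<times> {..<F} \<Longrightarrow> emb P g \<in> library N F"
  by (auto simp: library_def emb_def)

lemma count_bound:
  fixes enc :: "(nat \<Rightarrow> nat \<Rightarrow> 'g::{finite,ab_group_add}) \<Rightarrow> nat"
    and dec :: "nat \<Rightarrow> nat \<Rightarrow> (nat \<Rightarrow> nat \<Rightarrow> 'g) \<Rightarrow> nat \<Rightarrow> 'g"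
  assumes dec: "\<forall>W\<in>library N F. \<forall>k<K. \<forall>f<F. dec k (enc W) (cache_content N Z k W) f = W (d k) f"
    and k1: "k1 < K" "d k1 = 0" and f0: "f0 < F" "f0 \<notin> Z k1"
    and h: "\<forall>i\<in>{1..<s}. h i < K \<and> f0 \<notin> Z (h i) \<and> d (h i) = i"
    and sN: "s \<le> N" and N1: "1 \<le> N"
  shows "card (UNIV :: 'g set) ^ (card ({..<F} - Z k1) + (s - 1)) \<le> card (enc ` library N F)"
proof -
  define A1 where "A1 = {..<F} - Z k1"
  define P where "P = {0} \<times> A1 \<union> {1..<s} \<times> {f0}"
  have fin: "finite A1" unfolding A1_def by auto
  have cardP: "card P = card A1 + (s - 1)"
    unfolding P_def by (subst card_Un_disjoint) (auto simp: fin card_cartesian_product)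
  have PQ: "P \<subseteq> {..<N} \<times> {..<F}" using sN N1 f0 unfolding P_def A1_def by auto
  have finP: "finite P" unfolding P_def using fin by auto
  have inj: "inj_on (enc \<circ> emb P) (PiE P (\<lambda>_. UNIV))"
  proof (rule inj_onI)
    fix g g' assume g: "g \<in> PiE P (\<lambda>_. UNIV)" and g': "g' \<in> PiE P (\<lambda>_. UNIV)"
      and e: "(enc \<circ> emb P) g = (enc \<circ> emb P) g'"
    define W where "W = emb P g"
    define W' where "W' = emb P g'"
    have WL: "W \<in> library N F" "W' \<in> library N F" unfolding W_def W'_def using PQ
      by (auto intro: emb_library)
    have eW: "enc W = enc W'" using e by (simp add: W_def W'_def)
    have c1: "cache_content N Z k1 W = cache_content N Z k1 W'"
      unfolding cache_content_def W_def W'_def emb_def P_def A1_def using f0 by (auto simp: fun_eq_iff)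
    have s1: "W 0 f = W' 0 f" for f
    proof (cases "f < F")
      case True
      then show ?thesis using dec WL k1 c1 eW by metis
    next
      case False
      then show ?thesis using WL by (simp add: library_def)
    qed
    have s2: "W i f = W' i f" if "i \<in> {1..<s}" for i f
    proof (cases "f < F")
      case True
      have ci: "cache_content N Z (h i) W = cache_content N Z (h i) W'"
        unfolding cache_content_def fun_eq_iff
      proof (intro allI)
        fix n f'
        show "(if n < N \<and> f' \<in> Z (h i) then W n f' else 0) = (if n < N \<and> f' \<in> Z (h i) then W' n f' else 0)"
        proof (cases "n = 0")
          case True then show ?thesis using s1 by simp
        next
          case False
          then show ?thesis using h that unfolding W_def W'_def emb_def P_def by auto
        qed
      qed
      have "W (d (h i)) f = W' (d (h i)) f"
        using dec WL h that True ci eW by metis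
      then show ?thesis using h that by simp
    next
      case False
      then show ?thesis using WL by (simp add: library_def)
    qed
    show "g = g'"
    proof (rule PiE_ext[OF g g'])
      fix x assume x: "x \<in> P"
      obtain n f where nf: "x = (n,f)" by fastforce
      have "W n f = W' n f"
        using x s1 s2 unfolding nf P_def by auto
      then show "g x = g' x" using x nf by (simp add: W_def W'_def emb_def)
    qed
  qed
  have "card (PiE P (\<lambda>_. UNIV :: 'g set)) = card ((enc \<circ> emb P) ` PiE P (\<lambda>_. UNIV))"
    using card_image[OF inj] by simp
  also have "\<dots> \<le> card (enc ` library N F)"
    apply (rule card_mono)
    using library_finite apply blast
    using PQ by (auto intro: emb_library)
  finally have "card (PiE P (\<lambda>_. UNIV :: 'g set)) \<le> card (enc ` library N F)" .
  moreover have "card (PiE P (\<lambda>_. UNIV :: 'g set)) = card (UNIV :: 'g set) ^ (card ({..<F} - Z k1) + (s - 1))"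
    using card_PiE_UNIV[OF finP] cardP A1_def by simp
  ultimately show ?thesis by simp
qed

lemma powr_ge1_nonneg: "1 < (b::real) \<Longrightarrow> 1 \<le> b powr x \<Longrightarrow> 0 \<le> x"
  using powr_less_cancel_iff[of b x 0] by (cases "x < 0") auto

lemma rate_bound:
  fixes K N F :: nat and M R :: real
  assumes "K \<ge> 1" and "F \<ge> 1" and "N \<ge> 1"
    and "0 \<le> M" and "M \<le> real N"
    and tex: "\<exists>t::nat. real t = real F * M / real N"
    and NK: "real N \<ge> real K * (1 - M / real N)"
    and G2: "card (UNIV :: 'g::{finite,ab_group_add} set) \<ge> 2"
    and ach: "achievable TYPE('g) K N F M R"
  shows "(real K + real F) * (1 - M / real N) - 1 \<le> R * real F"
proof -
  obtain Z and enc :: "(nat \<Rightarrow> nat) \<Rightarrow> (nat \<Rightarrow> nat \<Rightarrow> 'g) \<Rightarrow> nat"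
    and dec :: "(nat \<Rightarrow> nat) \<Rightarrow> nat \<Rightarrow> nat \<Rightarrow> (nat \<Rightarrow> nat \<Rightarrow> 'g) \<Rightarrow> nat \<Rightarrow> 'g"
    where sc: "symmetric_caching K N F M Z"
    and ed: "\<And>d. (\<forall>k<K. d k < N) \<Longrightarrow>
            real (card (enc d ` library N F)) \<le> real (card (UNIV :: 'g set)) powr (R * real F) \<and>
            (\<forall>W\<in>library N F. \<forall>k<K. \<forall>f<F.
               dec d k (enc d W) (cache_content N Z k W) f = W (d k) f)"
    using ach unfolding achievable_def by blast
  obtain t :: nat where t: "real t = real F * M / real N" using tex by blast
  have cZ: "card (Z k) = t" "Z k \<subseteq> {..<F}" if "k < K" for k
    using sc that t unfolding symmetric_caching_def by auto
  have tF: "t \<le> F" using cZ[of 0] assms(1) card_mono[of "{..<F}" "Z 0"] by auto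
  define D where "D = F - t"
  have DF: "1 - M / real N = real D / real F"
    using t tF assms(2,3) unfolding D_def by (simp add: field_simps of_nat_diff)
  have Gr: "(1::real) < real (card (UNIV :: 'g set))" using G2 by simp
  show ?thesis
  proof (cases "D = 0")
    case True
    have "1 \<le> card (enc (\<lambda>_. 0) ` library N F)"
      using library_finite zero_library
      by (metis One_nat_def Suc_leI card_gt_0_iff empty_iff finite_imageI image_eqI)
    hence "1 \<le> real (card (UNIV :: 'g set)) powr (R * real F)"
      using ed[of "\<lambda>_. 0"] assms(3) by fastforce
    hence "0 \<le> R * real F" using powr_ge1_nonneg[OF Gr] by blast
    then show ?thesis using DF True by simp
  next
    case False
    define deg where "deg f = card {k\<in>{..<K}. f \<notin> Z k}" for f
    have sumdeg: "(\<Sum>f<F. deg f) = K * D"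
    proof -
      have "(\<Sum>f<F. deg f) = (\<Sum>f<F. \<Sum>k<K. if f \<notin> Z k then 1 else 0)"
        unfolding deg_def by (simp add: sum.If_cases Int_def)
      also have "\<dots> = (\<Sum>k<K. \<Sum>f<F. if f \<notin> Z k then 1 else 0)" by (rule sum.swap)
      also have "\<dots> = (\<Sum>k<K. D)"
      proof (rule sum.cong[OF refl])
        fix k assume "k \<in> {..<K}"
        hence k: "k < K" by simp
        have "(\<Sum>f<F. if f \<notin> Z k then 1 else 0) = card ({..<F} - Z k)"
          by (simp add: sum.If_cases Diff_eq Collect_neg_eq)
        also have "\<dots> = D" using cZ[OF k] unfolding D_def
          by (simp add: card_Diff_subset finite_subset)
        finally show "(\<Sum>f<F. if f \<notin> Z k then 1 else (0::nat)) = D" .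
      qed
      finally show ?thesis by simp
    qed
    obtain f0 where f0: "f0 < F" "K * D \<le> deg f0 * F"
    proof (rule ccontr)
      assume "\<not> thesis"
      hence lt: "\<forall>f<F. deg f * F < K * D" using that by (meson not_le)
      have "(\<Sum>f<F. deg f * F) < (\<Sum>f<F. K * D)"
        by (rule sum_strict_mono) (use lt assms(2) in \<open>auto simp: lessThan_empty_iff\<close>)
      moreover have "(\<Sum>f<F. deg f * F) = K * D * F" using sumdeg by (metis sum_distrib_right)
      ultimately show False by simp
    qed
    define s where "s = min (deg f0) N"
    have NF: "K * D \<le> N * F"
    proof -
      have "real K * real D / real F \<le> real N" using NK DF by simp
      hence "real K * real D \<le> real N * real F" using assms(2) by (simp add: field_simps)
      thus ?thesis by (metis of_nat_le_iff of_nat_mult)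
    qed
    have sF: "K * D \<le> s * F" unfolding s_def using f0 NF by (simp add: min_def)
    have s1: "1 \<le> s"
    proof (rule ccontr)
      assume "\<not> 1 \<le> s" hence "s = 0" by simp
      hence "K * D = 0" using sF by simp
      thus False using False assms(1) by simp
    qed
    have sN: "s \<le> N" unfolding s_def by simp
    have "s \<le> card {k\<in>{..<K}. f0 \<notin> Z k}" unfolding s_def deg_def by simp
    then obtain U where U: "U \<subseteq> {k\<in>{..<K}. f0 \<notin> Z k}" "card U = s"
      using obtain_subset_with_card_n by metis
    have finU: "finite U" using U(1) by (rule finite_subset) auto
    obtain h where h: "bij_betw h {0..<s} U" using ex_bij_betw_nat_finite[OF finU] U(2) by metis
    define d where "d k = (if k \<in> U then the_inv_into {0..<s} h k else 0)" for k
    have hinj: "inj_on h {0..<s}" using h bij_betw_def by blast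
    have hU: "h i \<in> U" if "i < s" for i using h that bij_betwE by fastforce
    have dh: "d (h i) = i" if "i < s" for i
      unfolding d_def using hU[OF that] the_inv_into_f_f[OF hinj] that by simp
    have dN: "\<forall>k<K. d k < N"
    proof (intro allI impI)
      fix k assume "k < K"
      show "d k < N"
      proof (cases "k \<in> U")
        case True
        have hs: "h ` {0..<s} = U" using h by (simp add: bij_betw_def)
        have "the_inv_into {0..<s} h k \<in> {0..<s}"
          by (rule the_inv_into_into[OF hinj]) (use hs True in auto)
        then show ?thesis using True sN unfolding d_def by auto
      next
        case False then show ?thesis using assms(3) unfolding d_def by simp
      qed
    qed
    define k1 where "k1 = h 0"
    have k1: "k1 < K" "d k1 = 0" "f0 \<notin> Z k1"
      using hU[of 0] s1 U(1) dh[of 0] unfolding k1_def by auto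
    have hh: "\<forall>i\<in>{1..<s}. h i < K \<and> f0 \<notin> Z (h i) \<and> d (h i) = i"
      using hU U(1) dh by fastforce
    have decd: "\<forall>W\<in>library N F. \<forall>k<K. \<forall>f<F. dec d k (enc d W) (cache_content N Z k W) f = W (d k) f"
      using ed[OF dN] by blast
    have cb: "card (UNIV :: 'g set) ^ (card ({..<F} - Z k1) + (s - 1)) \<le> card (enc d ` library N F)"
      by (rule count_bound[OF decd k1(1) k1(2) f0(1) k1(3) hh sN assms(3)])
    have cA: "card ({..<F} - Z k1) = D" using cZ[OF k1(1)] unfolding D_def
      by (simp add: card_Diff_subset finite_subset)
    have "real (card (UNIV :: 'g set)) powr real (D + (s - 1)) \<le> real (card (UNIV :: 'g set)) powr (R * real F)"
    proof -
      have "real (card (UNIV :: 'g set)) powr real (D + (s - 1)) = real (card (UNIV :: 'g set) ^ (D + (s - 1)))"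
        using Gr powr_realpow[of "real (card (UNIV :: 'g set))" "D + (s - 1)"] by (simp only: of_nat_power)
      also have "\<dots> \<le> real (card (enc d ` library N F))" using cb cA by simp
      also have "\<dots> \<le> real (card (UNIV :: 'g set)) powr (R * real F)" using ed[OF dN] by blast
      finally show ?thesis .
    qed
    hence le: "real (D + (s - 1)) \<le> R * real F" using Gr by simp
    have "(real K + real F) * (1 - M / real N) - 1 = real K * real D / real F + real D - 1"
      unfolding DF using assms(2) by (simp add: field_simps)
    also have "\<dots> \<le> real s + real D - 1"
    proof -
      have "real K * real D \<le> real s * real F" using sF by (metis of_nat_le_iff of_nat_mult)
      hence "real K * real D / real F \<le> real s" using assms(2) by (simp add: field_simps)
      thus ?thesis by simp
    qed
    also have "\<dots> = real (D + (s - 1))" using s1 by (simp add: of_nat_diff)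
    finally show ?thesis using le by linarith
  qed
qed

lemma achievable_nonempty:
  fixes K N F :: nat and M :: real
  assumes "F \<ge> 1" and "N \<ge> 1" and "0 \<le> M" and "M \<le> real N"
    and tex: "\<exists>t::nat. real t = real F * M / real N"
    and G2: "card (UNIV :: 'g::{finite,ab_group_add} set) \<ge> 2"
  shows "achievable TYPE('g) K N F M (real (card (library N F :: (nat \<Rightarrow> nat \<Rightarrow> 'g) set)))"
proof -
  obtain t :: nat where t: "real t = real F * M / real N" using tex by blast
  define L where "L = (library N F :: (nat \<Rightarrow> nat \<Rightarrow> 'g) set)"
  define c where "c = card L"
  obtain hb where hb: "bij_betw hb L {0..<c}"
    using ex_bij_betw_finite_nat[of L] library_finite unfolding L_def c_def by blast
  define Z :: "nat \<Rightarrow> nat set" where "Z = (\<lambda>_. {..<t})"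
  have sc: "symmetric_caching K N F M Z"
  proof -
    have "real F * M \<le> real F * real N" using assms by (simp add: mult_left_mono)
    hence "real F * M / real N \<le> real F" using assms(2) by (simp add: divide_le_eq)
    hence "t \<le> F" using t by simp
    thus ?thesis unfolding symmetric_caching_def Z_def using t by auto
  qed
  have cL: "card (hb ` L) = c" using hb unfolding bij_betw_def by simp
  have Gr: "(2::real) \<le> real (card (UNIV :: 'g set))" using G2 by simp
  have rate: "real c \<le> real (card (UNIV :: 'g set)) powr (real c * real F)"
  proof -
    have "real c < 2 ^ c" by (metis less_exp of_nat_less_iff of_nat_numeral of_nat_power)
    also have "(2::real) ^ c = 2 powr real c" by (simp add: powr_realpow)
    also have "\<dots> \<le> 2 powr (real c * real F)"
    proof (rule powr_mono)
      have "real c * 1 \<le> real c * real F" using assms(1) by (intro mult_left_mono) auto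
      thus "real c \<le> real c * real F" by simp
    qed simp
    also have "\<dots> \<le> real (card (UNIV :: 'g set)) powr (real c * real F)"
      by (rule powr_mono2) (use Gr in auto)
    finally show ?thesis by simp
  qed
  have inv: "inv_into L hb (hb W) = W" if "W \<in> L" for W
    using hb that by (simp add: bij_betw_def)
  show ?thesis
    unfolding achievable_def
    apply (rule exI[of _ Z], rule exI[of _ "\<lambda>d. hb"],
        rule exI[of _ "\<lambda>d k x c f. inv_into L hb x (d k) f"])
    using sc cL rate inv unfolding L_def c_def by auto
qed

theorem corollary3:
  fixes K N F :: nat and M :: real
  assumes "K \<ge> 1" and "F \<ge> 1" and "N \<ge> 1"
    and "0 \<le> M" and "M \<le> real N"
    and "\<exists>t::nat. real t = real F * M / real N"
    and "real N \<ge> real K * (1 - M / real N)"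
    and "card (UNIV :: 'g::{finite,ab_group_add} set) \<ge> 2"
  shows "optimal_rate TYPE('g) K N F M * real F \<ge> (real K + real F) * (1 - M / real N) - 1"
proof -
  let ?A = "{R. achievable TYPE('g) K N F M R}"
  let ?b = "(real K + real F) * (1 - M / real N) - 1"
  have ne: "?A \<noteq> {}" using achievable_nonempty[OF assms(2,3,4,5,6,8), of K] by blast
  have lb: "?b / real F \<le> R" if "R \<in> ?A" for R
    using rate_bound[OF assms, of R] that assms(2) by (simp add: divide_le_eq)
  have "?b / real F \<le> Inf ?A" by (rule cInf_greatest[OF ne]) (use lb in blast)
  hence "?b / real F \<le> optimal_rate TYPE('g) K N F M" unfolding optimal_rate_def .
  thus ?thesis using assms(2) by (simp add: divide_le_eq)
qed

end
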